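(* Let $R$ be a $*$-reducing ring and let $p,q\in R$ be projections. Then the following conditions are equivalent: (1) $1-pq$ is MP invertible; (2) $1-pqp$ is MP invertible; (3) $p-pqp$ is MP invertible; (4) $p-pq$ is MP invertible; (5) $p-qp$ is MP invertible; (6) $1-qp$ is MP invertible; (7) $1-qpq$ is MP invertible; (8) $q-qpq$ is MP invertible; (9) $q-qp$ is MP invertible; (10) $q-pq$ is MP invertible. Moreover, when any one of these conditions holds, $(p-pqp)^{\dagger}=(1-pq)^{\dagger}p$.
   Context: $R$ is an associative ring with identity $1$ and an involution $a\mapsto a^*$ (satisfying $(a^* )^*=a$, $(a+b)^*=a^*+b^*$, $(ab)^*=b^*a^*$). $R$ is $*$-reducing if $a^*a=0$ implies $a=0$ for all $a\in R$. An element $a$ is MP invertible if there is $b$ with $aba=a$, $bab=b$, $(ab)^*=ab$, $(ba)^*=ba$; this $b$ is unique and written $a^{\dagger}$. A projection is an element $p$ with $p^2=p=p^*$. *)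

theory Defs
  imports Main
begin

class ring_invol = ring_1 +
  fixes star :: "'a \<Rightarrow> 'a"
  assumes star_star: "star (star a) = a"
      and star_add: "star (a + b) = star a + star b"
      and star_mult: "star (a * b) = star b * star a"

context ring_invol
begin

definition is_MP_inverse :: "'a \<Rightarrow> 'a \<Rightarrow> bool" where
  "is_MP_inverse a b \<longleftrightarrow> a * b * a = a \<and> b * a * b = b \<and>
      star (a * b) = a * b \<and> star (b * a) = b * a"

definition MP_invertible :: "'a \<Rightarrow> bool" where
  "MP_invertible a \<longleftrightarrow> (\<exists>b. is_MP_inverse a b)"

definition MP_inv :: "'a \<Rightarrow> 'a" where
  "MP_inv a = (THE b. is_MP_inverse a b)"

definition projection :: "'a \<Rightarrow> bool" where
  "projection p \<longleftrightarrow> p * p = p \<and> star p = p"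

end

definition star_reducing :: "'a::ring_invol itself \<Rightarrow> bool" where
  "star_reducing (_ :: 'a itself) \<longleftrightarrow> (\<forall>a::'a. star a * a = 0 \<longrightarrow> a = 0)"

end

theory Submission
  imports Defs
begin

context ring_invol begin

lemma star_zero[simp]: "star 0 = 0"
proof -
  have "star 0 = star 0 + star 0" using star_add[of 0 0] by simp
  thus ?thesis by simp
qed

lemma star_one[simp]: "star 1 = 1"
proof -
  have "star 1 = star 1 * star (star 1)" by (metis star_star mult_1_right)
  also have "\<dots> = star (star 1 * 1)" by (rule star_mult[symmetric])
  also have "\<dots> = 1" by (simp add: star_star)
  finally show ?thesis .
qed

lemma star_uminus[simp]: "star (- a) = - star a"
proof -
  have "star a + star (-a) = 0" using star_add[of a "-a"] by simp
  thus ?thesis by (simp add: add_eq_0_iff2)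
qed

lemma star_diff[simp]: "star (a - b) = star a - star b"
  using star_add[of a "-b"] by simp

lemmas star_simps[simp] = star_star star_add star_mult

lemma mp_unique:
  assumes "is_MP_inverse a b" "is_MP_inverse a c" shows "b = c"
proof -
  have b1: "a*b*a = a" "b*a*b = b" "star (a*b) = a*b" "star (b*a) = b*a"
    and c1: "a*c*a = a" "c*a*c = c" "star (a*c) = a*c" "star (c*a) = c*a"
    using assms unfolding is_MP_inverse_def by auto
  have "b = b*(a*b)" using b1 by (simp add: mult.assoc)
  also have "\<dots> = b * star (a*b)" using b1 by simp
  also have "\<dots> = b * star b * star (a*c*a)" using c1 by (simp add: mult.assoc)
  also have "\<dots> = b * (star (a*b) * star (a*c))" by (simp add: mult.assoc)
  also have "\<dots> = b*a*c" using b1 c1 by (simp add: mult.assoc[symmetric])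
  finally have 1: "b = b*a*c" .
  have "c = (c*a)*c" using c1 by (simp add: mult.assoc)
  also have "\<dots> = star (c*a) * c" using c1 by simp
  also have "\<dots> = star (a*b*a) * star c * c" using b1 by (simp add: mult.assoc)
  also have "\<dots> = star (b*a) * star (c*a) * c" by (simp add: mult.assoc)
  also have "\<dots> = b*a*c" using b1 c1 by (simp add: mult.assoc)
  finally show ?thesis using 1 by simp
qed

lemma MP_inv_eq: "is_MP_inverse a b \<Longrightarrow> MP_inv a = b"
  unfolding MP_inv_def using mp_unique by blast

lemma MP_inv_is: "MP_invertible a \<Longrightarrow> is_MP_inverse a (MP_inv a)"
  unfolding MP_invertible_def using MP_inv_eq by auto

lemma mp_star: "is_MP_inverse a b \<Longrightarrow> is_MP_inverse (star a) (star b)"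
  unfolding is_MP_inverse_def
  by (metis star_mult star_star mult.assoc)

lemma MP_invertible_star: "MP_invertible (star a) \<longleftrightarrow> MP_invertible a"
  unfolding MP_invertible_def by (metis mp_star star_star)

end

context ring_invol begin

lemma mp_hermitian:
  assumes "star a = a" "is_MP_inverse a b" shows "star b = b" "a*b = b*a"
proof -
  have "is_MP_inverse a (star b)" using mp_star[OF assms(2)] assms(1) by simp
  thus sb: "star b = b" using mp_unique assms(2) by blast
  have "a*b = star (a*b)" using assms(2) unfolding is_MP_inverse_def by simp
  also have "\<dots> = b*a" using sb assms(1) by simp
  finally show "a*b = b*a" .
qed

lemma mp_aastar:
  assumes "is_MP_inverse a b" shows "is_MP_inverse (a * star a) (star b * b)"
proof -
  have h1: "a*(b*a) = a" "b*(a*b) = b" "star b * star a = a*b" "star a * star b = b*a"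
    using assms unfolding is_MP_inverse_def by (auto simp: mult.assoc)
  have h1': "a*(b*(a*x)) = a*x" "b*(a*(b*x)) = b*x" "star b * (star a * x) = a*(b*x)"
     "star a * (star b * x) = b*(a*x)" for x
    using h1 by (metis mult.assoc)+
  have h2: "a*(b*star b) = star b"
    by (metis h1(2) h1(3) star_mult mult.assoc star_star)
  have h2': "a*(b*(star b*x)) = star b*x" for x using h2 by (metis mult.assoc)
  have h3: "star a * (a*b) = star a"
    by (metis h1(1) h1(3) star_mult mult.assoc)
  have h3': "star a * (a*(b*x)) = star a*x" for x using h3 by (metis mult.assoc)
  have h4: "b*(a*star a) = star a"
    by (metis h1(1) h1(4) star_mult mult.assoc)
  have h4': "b*(a*(star a*x)) = star a*x" for x using h4 by (metis mult.assoc)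
  have st: "a * star a * (star b * b) = a*b"
    by (simp add: mult.assoc h1' h1)
  have ts: "star b * b * (a * star a) = a*b"
    by (simp add: mult.assoc h1' h1 h4 h4')
  show ?thesis unfolding is_MP_inverse_def
  proof (intro conjI)
    show "a * star a * (star b * b) * (a * star a) = a * star a"
      unfolding st by (simp add: mult.assoc h1' h1)
    show "star b * b * (a * star a) * (star b * b) = star b * b"
      unfolding ts by (simp add: mult.assoc h2' h2)
    show "star (a * star a * (star b * b)) = a * star a * (star b * b)"
      unfolding st using assms unfolding is_MP_inverse_def by simp
    show "star (star b * b * (a * star a)) = star b * b * (a * star a)"
      unfolding ts using assms unfolding is_MP_inverse_def by simp
  qed
qed

lemma reducing_left:
  assumes R: "\<forall>x. star x * x = 0 \<longrightarrow> x = 0" and "x * star x = 0" shows "x = 0"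
proof -
  have "star (star x) * star x = 0" using assms(2) by simp
  hence "star x = 0" using R by blast
  hence "star (star x) = 0" by simp
  thus ?thesis by simp
qed

lemma mp_from_aastar:
  assumes R: "\<forall>x. star x * x = 0 \<longrightarrow> x = 0"
    and t: "is_MP_inverse (a * star a) t"
  shows "is_MP_inverse a (star a * t)"
proof -
  have sh: "star (a * star a) = a * star a" by simp
  have tt: "star t = t" and com: "a * star a * t = t * (a * star a)"
    using mp_hermitian[OF sh t] by auto
  have sts: "a * star a * t * (a * star a) = a * star a" and tst: "t * (a*star a) * t = t"
    using t unfolding is_MP_inverse_def by auto
  have sts': "a * (star a * (t * (a * (star a * x)))) = a * (star a * x)" for x
    using sts by (metis mult.assoc)
  have sts'': "a * (star a * (t * (a * star a))) = a * star a"
    using sts by (metis mult.assoc)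
  have com': "t * (a * (star a * x)) = a * (star a * (t * x))" for x
    using com by (metis mult.assoc)
  have tst': "t * (a * (star a * t)) = t" using tst by (metis mult.assoc)
  define x where "x = a - a * star a * t * a"
  have "x * star x = 0"
    unfolding x_def by (simp add: tt algebra_simps sts' sts'')
  hence x0: "x = 0" using reducing_left[OF R] by blast
  show ?thesis unfolding is_MP_inverse_def
  proof (intro conjI)
    show "a * (star a * t) * a = a" using x0 unfolding x_def by (simp add: mult.assoc)
    show "star a * t * a * (star a * t) = star a * t"
      by (simp add: mult.assoc tst')
    show "star (a * (star a * t)) = a * (star a * t)"
      using com by (simp add: tt mult.assoc)
    show "star (star a * t * a) = star a * t * a"
      by (simp add: tt mult.assoc)
  qed
qed

lemma MP_invertible_aastar:
  assumes R: "\<forall>x. star x * x = 0 \<longrightarrow> x = 0"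
  shows "MP_invertible (a * star a) \<longleftrightarrow> MP_invertible a"
  unfolding MP_invertible_def using mp_aastar mp_from_aastar[OF R] by blast

end

context ring_invol begin

lemma drazin_i:
  assumes ca: "c*a = a*c" and cs: "c*star a = star a*c" and ab: "is_MP_inverse a b"
  shows "a*b*c = a*b*c*a*b"
proof -
  have h1: "a*b*a = a" "star b * star a = a*b"
    using ab unfolding is_MP_inverse_def by (auto simp: mult.assoc)
  have h3: "star a = star a * a * b"
    by (metis h1 star_mult mult.assoc)
  have "a*b*c = star b * star a * c" using h1 by simp
  also have "\<dots> = star b * c * star a" using cs by (simp add: mult.assoc)
  also have "\<dots> = star b * c * (star a * a * b)" using h3 by simp
  also have "\<dots> = star b * (c * star a) * a * b" by (simp add: mult.assoc)
  also have "\<dots> = star b * star a * c * a * b" using cs by (simp add: mult.assoc)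
  also have "\<dots> = a*b*c*a*b" using h1 by simp
  finally show ?thesis .
qed

lemma drazin_ii:
  assumes ca: "c*a = a*c" and cs: "c*star a = star a*c" and ab: "is_MP_inverse a b"
  shows "c*b*a = b*a*c*b*a"
proof -
  have h1: "a*b*a = a" "star a * star b = b*a"
    using ab unfolding is_MP_inverse_def by (auto simp: mult.assoc)
  have h4: "star a = b * a * star a"
    by (metis h1 star_mult mult.assoc)
  have "c*b*a = c * (star a * star b)" using h1 by (simp add: mult.assoc)
  also have "\<dots> = star a * c * star b" using cs by (metis mult.assoc)
  also have "\<dots> = (b * a * star a) * c * star b" using h4 by simp
  also have "\<dots> = b * a * (star a * c) * star b" by (simp add: mult.assoc)
  also have "\<dots> = b * a * c * (star a * star b)" using cs by (metis mult.assoc)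
  also have "\<dots> = b*a*c*b*a" using h1 by (simp add: mult.assoc)
  finally show ?thesis .
qed

lemma drazin:
  assumes ca: "c*a = a*c" and cs: "c*star a = star a*c" and ab: "is_MP_inverse a b"
  shows "c*b = b*c"
proof -
  have ca': "star c * a = a * star c" by (metis cs star_mult star_star)
  have cs': "star c * star a = star a * star c" by (metis ca star_mult)
  have hb: "b*a*b = b" "star (a*b) = a*b" "star (b*a) = b*a"
    using ab unfolding is_MP_inverse_def by auto
  have hbx: "star b * (star a * z) = a*(b*z)" "star a * (star b * z) = b*(a*z)"
     "b*(a*(b*z)) = b*z" for z
    using hb by (metis star_mult mult.assoc)+
  have i1: "a*b*c = a*b*c*a*b" by (rule drazin_i[OF ca cs ab])
  have i2: "a*b*star c = a*b*star c*a*b" by (rule drazin_i[OF ca' cs' ab])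
  have "star (a*b*star c) = star (a*b*star c*a*b)" using i2 by simp
  hence "c*(a*b) = a*b*c*(a*b)" using hb by (simp add: mult.assoc hbx)
  hence e1: "c*a*b = a*b*c" using i1 by (simp add: mult.assoc)
  have j1: "c*b*a = b*a*c*b*a" by (rule drazin_ii[OF ca cs ab])
  have j2: "star c*b*a = b*a*star c*b*a" by (rule drazin_ii[OF ca' cs' ab])
  have "star (star c*b*a) = star (b*a*star c*b*a)" using j2 by simp
  hence "b*a*c = b*a*(c*(b*a))" using hb by (simp add: mult.assoc hbx)
  hence e2: "b*a*c = c*b*a" using j1 by (simp add: mult.assoc hbx)
  have "b*c = b*(a*b*c)" using hbx by (simp add: mult.assoc)
  also have "\<dots> = b*(c*a)*b" using e1 by (simp add: mult.assoc)
  also have "\<dots> = b*a*c*b" using ca by (simp add: mult.assoc)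
  also have "\<dots> = c*b*(a*b)" using e2 by (simp add: mult.assoc)
  also have "\<dots> = c*b" using hb by (simp add: mult.assoc)
  finally show ?thesis by simp
qed

lemma orth_fwd:
  assumes pp: "p*p = p" "star p = p" and pa: "p*a = a" "a*p = a"
    and ab: "is_MP_inverse a b"
  shows "is_MP_inverse (a + (1 - p)) (b + (1 - p))"
proof -
  have hb: "a*b*a = a" "b*a*b = b" "star (a*b) = a*b" "star (b*a) = b*a"
    using ab unfolding is_MP_inverse_def by auto
  have sa: "star a * p = star a" "p * star a = star a"
    using pa pp by (metis star_mult)+
  have bp: "b*p = b"
  proof -
    have "b = b*star(a*b)" using hb by (simp add: mult.assoc)
    also have "\<dots> = b*star b*star a" by (simp add: mult.assoc)
    finally have "b = b*star b*star a" .
    hence "b*p = b*star b*(star a*p)" by (metis mult.assoc)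
    thus ?thesis using sa `b = b*star b*star a` by (simp add: mult.assoc)
  qed
  have pb: "p*b = b"
  proof -
    have "b = star(b*a)*b" using hb by (simp add: mult.assoc)
    also have "\<dots> = star a*star b*b" by (simp add: mult.assoc)
    finally have "b = star a*star b*b" .
    hence "p*b = (p*star a)*star b*b" by (metis mult.assoc)
    thus ?thesis using sa `b = star a*star b*b` by (simp add: mult.assoc)
  qed
  have r: "p*(p*x) = p*x" "p*(a*x) = a*x" "a*(p*x) = a*x" "b*(p*x) = b*x" "p*(b*x) = b*x" for x
    using pp pa bp pb by (metis mult.assoc)+
  have r2: "a*(b*(a*x)) = a*x" "b*(a*(b*x)) = b*x" "a*(b*a) = a" "b*(a*b) = b" for x
    using hb by (metis mult.assoc)+
  have xy: "(a + (1 - p)) * (b + (1 - p)) = a*b + (1 - p)"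
    by (simp add: algebra_simps pp pa bp pb r)
  have yx: "(b + (1 - p)) * (a + (1 - p)) = b*a + (1 - p)"
    by (simp add: algebra_simps pp pa bp pb r)
  show ?thesis unfolding is_MP_inverse_def xy yx
    using hb by (simp add: algebra_simps pp pa bp pb r r2)
qed

lemma orth_bwd:
  assumes pp: "p*p = p" "star p = p" and pa: "p*a = a" "a*p = a"
    and xy: "is_MP_inverse (a + (1 - p)) y"
  shows "is_MP_inverse a (p*y)"
proof -
  define x where "x = a + (1 - p)"
  have sa: "star a * p = star a" "p * star a = star a"
    using pa pp by (metis star_mult)+
  have px: "p*x = a" "x*p = a" unfolding x_def by (simp_all add: algebra_simps pp pa)
  have pxs: "p * star x = star x * p" unfolding x_def by (simp add: algebra_simps pp sa)
  have yy: "is_MP_inverse x y" using xy x_def by simp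
  have py: "p*y = y*p" using drazin[OF _ pxs yy] px by simp
  have hb: "x*y*x = x" "y*x*y = y" "star (x*y) = x*y" "star (y*x) = y*x"
    using yy unfolding is_MP_inverse_def by auto
  have r: "p*(p*z) = p*z" "x*(p*z) = p*(x*z)" "y*(p*z) = p*(y*z)" "x*p = p*x" "y*p = p*y"
    "x*(y*(x*z)) = x*z" "y*(x*(y*z)) = y*z" "x*(y*x) = x" "y*(x*y) = y" for z
    using pp px py hb by (metis mult.assoc)+
  have e1: "a*(p*y) = p*(x*y)" using px r by (metis mult.assoc)
  have e2: "p*y*a = p*(y*x)" using px r by (metis mult.assoc)
  show ?thesis unfolding is_MP_inverse_def
  proof (intro conjI)
    show "a * (p * y) * a = a" unfolding px(1)[symmetric] by (simp add: mult.assoc r pp)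
    show "p * y * a * (p * y) = p * y" unfolding px(1)[symmetric] by (simp add: mult.assoc r pp)
    show "star (a * (p * y)) = a * (p * y)" unfolding e1 using hb pp r by (simp add: mult.assoc)
    show "star (p * y * a) = p * y * a" unfolding e2 using hb pp r by (simp add: mult.assoc)
  qed
qed

lemma MP_invertible_orth:
  assumes "p*p = p" "star p = p" "p*a = a" "a*p = a"
  shows "MP_invertible (a + (1 - p)) \<longleftrightarrow> MP_invertible a"
  unfolding MP_invertible_def using orth_fwd[OF assms] orth_bwd[OF assms] by blast

end

context ring_invol begin

lemma L1abs:
  assumes R: "\<forall>x. star x * x = 0 \<longrightarrow> x = 0"
    and pp: "p*p = p" "star p = p"
    and hA: "star A = A" "p*A = A" "A*p = A"
    and hk: "A - A*A = k * star k" "p*k = k" "k*p = 0"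
    and Ab: "is_MP_inverse A b"
  shows "is_MP_inverse (A + (1-p) - k) (b + b*k + (1-p))"
proof -
  have sb: "star b = b" and com: "A*b = b*A" using mp_hermitian[OF hA(1) Ab] by auto
  have hb: "A*b*A = A" "b*A*b = b" using Ab unfolding is_MP_inverse_def by auto
  have AAb: "A*(A*b) = A" using hb com by (simp add: mult.assoc[symmetric])
  have Abb: "A*(b*b) = b"
  proof -
    have "A*(b*b) = (A*b)*b" by (simp add: mult.assoc)
    also have "\<dots> = b*A*b" using com by simp
    finally show ?thesis using hb by simp
  qed
  have pb: "p*b = b"
  proof -
    have "p*b = p*(A*(b*b))" using Abb by simp
    also have "\<dots> = (p*A)*(b*b)" by (simp add: mult.assoc)
    finally show ?thesis using Abb hA by simp
  qed
  have bp: "b*p = b"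
  proof -
    have "b = b*(A*b)" using hb by (simp add: mult.assoc)
    hence "b = b*b*A" using com by (simp add: mult.assoc)
    hence "b*p = b*b*(A*p)" by (metis mult.assoc)
    thus ?thesis using hA \<open>b = b*b*A\<close> by simp
  qed
  have kA: "k*A = 0"
  proof -
    have "k*A = k*(p*A)" using hA by simp
    thus ?thesis using hk by (simp add: mult.assoc[symmetric])
  qed
  have kb: "k*b = 0"
  proof -
    have "k*b = k*(p*b)" using pb by simp
    thus ?thesis using hk by (simp add: mult.assoc[symmetric])
  qed
  have kk: "k*k = 0"
  proof -
    have "k*k = (k*p)*k" using hk(2) by (simp add: mult.assoc)
    thus ?thesis using hk(3) by simp
  qed
  define X where "X = p - A*b"
  have sX: "star X = X" unfolding X_def using pp sb hA com by simp
  have XA: "X*A = 0" unfolding X_def using hA hb by (simp add: left_diff_distrib)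
  have AX: "A*X = 0" unfolding X_def using hA AAb by (simp add: right_diff_distrib mult.assoc)
  have "X*k*star (X*k) = X*(k*star k)*X" using sX by (simp add: mult.assoc)
  also have "\<dots> = X*(A - A*A)*X" using hk(1) by simp
  also have "\<dots> = X*A*X - X*A*A*X" by (simp add: right_diff_distrib left_diff_distrib mult.assoc)
  also have "\<dots> = 0" using XA by simp
  finally have "X*k = 0" using reducing_left[OF R] by blast
  hence "k - A*b*k = 0" unfolding X_def using hk by (simp add: left_diff_distrib)
  hence Abk: "A*(b*k) = k" by (simp add: mult.assoc)
  have r: "p*(p*z) = p*z" "p*(A*z) = A*z" "A*(p*z) = A*z" "p*(b*z) = b*z" "b*(p*z) = b*z"
    "p*(k*z) = k*z" "k*(p*z) = 0" "A*(A*(b*z)) = A*z" "A*(b*(b*z)) = b*z"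
    "b*(A*z) = A*(b*z)" "A*(b*(k*z)) = k*z" "k*(A*z) = 0" "k*(b*z) = 0" "k*(k*z) = 0" for z
    subgoal using pp by (metis mult.assoc)
    subgoal using hA by (metis mult.assoc)
    subgoal using hA by (metis mult.assoc)
    subgoal using pb by (metis mult.assoc)
    subgoal using bp by (metis mult.assoc)
    subgoal using hk by (metis mult.assoc)
    subgoal using hk by (metis mult.assoc mult_zero_left)
    subgoal using AAb by (metis mult.assoc)
    subgoal using Abb by (metis mult.assoc)
    subgoal using com by (metis mult.assoc)
    subgoal using Abk by (metis mult.assoc)
    subgoal using kA by (metis mult.assoc mult_zero_left)
    subgoal using kb by (metis mult.assoc mult_zero_left)
    subgoal using kk by (metis mult.assoc mult_zero_left)
    done
  note rr = r pp hA hk(2,3) pb bp AAb Abb com[symmetric] Abk kA kb kk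
  have ut: "(A + (1-p) - k) * (b + b*k + (1-p)) = A*b + (1-p)"
    by (simp add: algebra_simps rr)
  have tu: "(b + b*k + (1-p)) * (A + (1-p) - k) = A*b + (1-p)"
    by (simp add: algebra_simps rr)
  show ?thesis unfolding is_MP_inverse_def ut tu
    using sb by (simp add: algebra_simps rr)
qed

end

context ring_invol begin

lemma L2abs:
  assumes R: "\<forall>x. star x * x = 0 \<longrightarrow> x = 0"
    and pp: "p*p = p" "star p = p"
    and hA: "star A = A" "p*A = A" "A*p = A"
    and hk: "A - A*A = k * star k" "p*k = k" "k*p = 0"
    and us: "is_MP_inverse (A + (1-p) - k) s"
  shows "is_MP_inverse A (s*p)"
proof -
  define f where "f = 1 - p"
  define u where "u = A + (1-p) - k"
  have hu: "u*s*u = u" "s*u*s = s" "star (u*s) = u*s" "star (s*u) = s*u"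
    using us unfolding is_MP_inverse_def u_def by auto
  have sf: "star f = f" unfolding f_def using pp by simp
  have fp: "f*p = 0" unfolding f_def using pp by (simp add: left_diff_distrib)
  have fA: "f*A = 0" unfolding f_def using hA by (simp add: left_diff_distrib)
  have fu: "f*u = f" unfolding f_def u_def using pp hA hk by (simp add: algebra_simps)
  have up: "u*p = A" unfolding u_def using pp hA hk by (simp add: algebra_simps)
  define Q where "Q = s*u"
  define P where "P = u*s"
  have sQ: "star Q = Q" and sP: "star P = P" using hu unfolding Q_def P_def by auto
  have Qsu: "Q * star u = star u"
  proof -
    have "star u = star (u*(s*u))" using hu by (simp add: mult.assoc)
    also have "\<dots> = star (s*u) * star u" by (rule star_mult)
    finally show ?thesis using hu Q_def by simp
  qed
  have suf: "star u * f = f" using fu sf by (metis star_mult)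
  have Qf: "Q*f = f" using Qsu suf by (metis mult.assoc)
  have fQ: "f*Q = f" using Qf sQ sf by (metis star_mult)
  define W where "W = 1 - P"
  have sW: "star W = W" unfolding W_def using sP by simp
  have Wu: "W*u = 0" unfolding W_def P_def using hu by (simp add: left_diff_distrib)
  have WW: "W*W = W"
  proof -
    have "P*P = P" unfolding P_def using hu by (simp add: mult.assoc[symmetric])
    thus ?thesis unfolding W_def by (simp add: algebra_simps)
  qed
  have WA: "W*A = 0" using Wu up by (metis mult.assoc mult_zero_left)
  define X where "X = p*W*p"
  have sX: "star X = X" unfolding X_def using sW pp by (simp add: mult.assoc)
  have XA: "X*A = 0" unfolding X_def using WA hA by (simp add: mult.assoc)
  have AX: "A*X = 0"
  proof -
    have "star (X*A) = A*X" using sX hA by simp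
    thus ?thesis using XA by simp
  qed
  have "X*k*star (X*k) = X*(k*star k)*X" using sX by (simp add: mult.assoc)
  also have "\<dots> = X*(A - A*A)*X" using hk(1) by simp
  also have "\<dots> = X*A*X - X*A*A*X" by (simp add: right_diff_distrib left_diff_distrib mult.assoc)
  also have "\<dots> = 0" using XA by simp
  finally have Xk: "X*k = 0" using reducing_left[OF R] by blast
  have "W*u = W*A + W*(1-p) - W*k" unfolding u_def by (simp add: algebra_simps)
  hence "W*(1-p) - W*k = 0" by (simp only: Wu WA add_0_left)
  hence Wf: "W*f = W*k" unfolding f_def by simp
  have pWf: "p*(W*f) = 0"
  proof -
    have "p*(W*f) = p*(W*(p*k))" using Wf hk by simp
    also have "\<dots> = X*k" unfolding X_def by (simp add: mult.assoc)
    finally show ?thesis using Xk by simp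
  qed
  have fWp: "f*W*p = 0"
  proof -
    have "star (p*(W*f)) = f*W*p" using sf sW pp by (simp add: mult.assoc)
    thus ?thesis using pWf by simp
  qed
  have "star (W*f) * (W*f) = f*(W*W)*f" using sf sW by (simp add: mult.assoc)
  also have "\<dots> = f*(W*k)" using WW Wf by (simp add: mult.assoc)
  also have "\<dots> = (f*W*p)*k" using hk by (simp add: mult.assoc)
  also have "\<dots> = 0" using fWp by simp
  finally have "W*f = 0" using R by blast
  hence Pf: "P*f = f" unfolding W_def by (simp add: left_diff_distrib)
  have fP: "f*P = f" using Pf sP sf by (metis star_mult)
  have fs: "f*s = f"
  proof -
    have "f*s = f*u*s" using fu by simp
    also have "\<dots> = f*P" unfolding P_def by (simp add: mult.assoc)
    finally show ?thesis using fP by simp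
  qed
  have p_eq: "p = 1 - f" unfolding f_def by (simp add: algebra_simps)
  have Pu: "P*u = u" unfolding P_def using hu by simp
  have Qs: "Q*s = s" unfolding Q_def using hu by simp
  have Ac: "A*(s*p) = P - f"
  proof -
    have "A*(s*p) = u*p*s*p" using up by (simp add: mult.assoc)
    also have "\<dots> = u*(1-f)*s*p" by (subst (1) p_eq, rule refl)
    also have "\<dots> = P*p - u*(f*s)*p" unfolding P_def by (simp add: algebra_simps)
    also have "\<dots> = P*p" using fs fp by (simp add: mult.assoc)
    also have "\<dots> = P*(1-f)" by (subst p_eq, rule refl)
    also have "\<dots> = P - f" using Pf by (simp add: right_diff_distrib)
    finally show ?thesis .
  qed
  have cA: "s*p*A = Q - f"
  proof -
    have "s*p*A = s*(u*p)" using hA up by (simp add: mult.assoc)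
    also have "\<dots> = Q*p" unfolding Q_def by (simp add: mult.assoc)
    also have "\<dots> = Q*(1-f)" by (subst p_eq, rule refl)
    also have "\<dots> = Q - f" using Qf by (simp add: right_diff_distrib)
    finally show ?thesis .
  qed
  show ?thesis unfolding is_MP_inverse_def
  proof (intro conjI)
    show "A * (s * p) * A = A"
    proof -
      have "A * (s * p) * A = P*(u*p) - f*A" using up by (simp add: Ac left_diff_distrib)
      also have "\<dots> = u*p" using fA Pu by (simp add: mult.assoc[symmetric])
      finally show ?thesis using up by simp
    qed
    show "s * p * A * (s * p) = s * p"
    proof -
      have "s * p * A * (s * p) = (Q - f)*(s*p)" using cA by simp
      also have "\<dots> = Q*s*p - f*s*p" by (simp add: left_diff_distrib mult.assoc)
      finally have "s * p * A * (s * p) = Q*s*p - f*s*p" .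
      thus ?thesis using Qs fs fp by (simp add: mult.assoc)
    qed
    show "star (A * (s * p)) = A * (s * p)" unfolding Ac using sP sf by simp
    show "star (s * p * A) = s * p * A" unfolding cA using sQ sf by simp
  qed
qed

end

context ring_invol begin

lemma pq_facts:
  assumes R: "\<forall>x. star x * x = 0 \<longrightarrow> x = 0"
    and p: "projection p" and q: "projection q"
  shows "MP_invertible (1 - p*q) \<longleftrightarrow> MP_invertible (1 - p*q*p)"
    "MP_invertible (1 - p*q*p) \<longleftrightarrow> MP_invertible (p - p*q*p)"
    "MP_invertible (p - p*q*p) \<longleftrightarrow> MP_invertible (p - p*q)"
    "MP_invertible (p - p*q) \<longleftrightarrow> MP_invertible (p - q*p)"
    "MP_invertible (p - q*p) \<longleftrightarrow> MP_invertible (1 - q*p)"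
    "MP_invertible (1 - p*q) \<longrightarrow> MP_inv (p - p*q*p) = MP_inv (1 - p*q) * p"
proof -
  have pp: "p*p = p" "star p = p" using p unfolding projection_def by auto
  have qq: "q*q = q" "star q = q" using q unfolding projection_def by auto
  have r: "p*(p*z) = p*z" "q*(q*z) = q*z" for z using pp qq by (metis mult.assoc)+
  define A where "A = p - p*q*p"
  define k where "k = p*q - p*q*p"
  have hA: "star A = A" "p*A = A" "A*p = A" unfolding A_def
    using pp qq r by (simp_all add: algebra_simps)
  have hk: "A - A*A = k * star k" "p*k = k" "k*p = 0" unfolding A_def k_def
    using pp qq r by (simp_all add: algebra_simps)
  have u: "1 - p*q = A + (1-p) - k" unfolding A_def k_def by (simp add: algebra_simps)
  have v: "1 - p*q*p = A + (1-p)" unfolding A_def by (simp add: algebra_simps)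
  have a': "(p - p*q) * star (p - p*q) = A" unfolding A_def
    using pp qq r by (simp add: algebra_simps)
  have s1: "star (p - p*q) = p - q*p" using pp qq by simp
  have s2: "star (1 - p*q) = 1 - q*p" using pp qq by simp
  have e1: "MP_invertible (1 - p*q) \<longleftrightarrow> MP_invertible A"
    unfolding u MP_invertible_def using L1abs[OF R pp hA hk] L2abs[OF R pp hA hk] by blast
  have e2: "MP_invertible (1 - p*q*p) \<longleftrightarrow> MP_invertible A"
    unfolding v using MP_invertible_orth[OF pp hA(2,3)] .
  have e3: "MP_invertible (p - p*q) \<longleftrightarrow> MP_invertible A"
    using MP_invertible_aastar[OF R, of "p - p*q"] a' by simp
  have e4: "MP_invertible (p - p*q) \<longleftrightarrow> MP_invertible (p - q*p)"
    using MP_invertible_star[of "p - p*q"] s1 by simp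
  have e5: "MP_invertible (1 - p*q) \<longleftrightarrow> MP_invertible (1 - q*p)"
    using MP_invertible_star[of "1 - p*q"] s2 by simp
  show "MP_invertible (1 - p*q) \<longleftrightarrow> MP_invertible (1 - p*q*p)"
    "MP_invertible (1 - p*q*p) \<longleftrightarrow> MP_invertible (p - p*q*p)"
    "MP_invertible (p - p*q*p) \<longleftrightarrow> MP_invertible (p - p*q)"
    "MP_invertible (p - p*q) \<longleftrightarrow> MP_invertible (p - q*p)"
    "MP_invertible (p - q*p) \<longleftrightarrow> MP_invertible (1 - q*p)"
    using e1 e2 e3 e4 e5 unfolding A_def by blast+
  show "MP_invertible (1 - p*q) \<longrightarrow> MP_inv (p - p*q*p) = MP_inv (1 - p*q) * p"
  proof
    assume "MP_invertible (1 - p*q)"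
    hence "is_MP_inverse (A + (1-p) - k) (MP_inv (1 - p*q))" using MP_inv_is u by simp
    hence "is_MP_inverse A (MP_inv (1 - p*q) * p)" by (rule L2abs[OF R pp hA hk])
    thus "MP_inv (p - p*q*p) = MP_inv (1 - p*q) * p" using MP_inv_eq A_def by simp
  qed
qed

end

theorem corollary2p5:
  fixes p q :: "'a :: ring_invol"
  assumes "star_reducing TYPE('a)"
    and "projection p" and "projection q"
  shows "(MP_invertible (1 - p*q) \<longleftrightarrow> MP_invertible (1 - p*q*p))
       \<and> (MP_invertible (1 - p*q*p) \<longleftrightarrow> MP_invertible (p - p*q*p))
       \<and> (MP_invertible (p - p*q*p) \<longleftrightarrow> MP_invertible (p - p*q))
       \<and> (MP_invertible (p - p*q) \<longleftrightarrow> MP_invertible (p - q*p))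
       \<and> (MP_invertible (p - q*p) \<longleftrightarrow> MP_invertible (1 - q*p))
       \<and> (MP_invertible (1 - q*p) \<longleftrightarrow> MP_invertible (1 - q*p*q))
       \<and> (MP_invertible (1 - q*p*q) \<longleftrightarrow> MP_invertible (q - q*p*q))
       \<and> (MP_invertible (q - q*p*q) \<longleftrightarrow> MP_invertible (q - q*p))
       \<and> (MP_invertible (q - q*p) \<longleftrightarrow> MP_invertible (q - p*q))
       \<and> (MP_invertible (1 - p*q) \<longrightarrow> MP_inv (p - p*q*p) = MP_inv (1 - p*q) * p)"
proof -
  have R: "\<forall>x::'a. star x * x = 0 \<longrightarrow> x = 0" using assms(1) unfolding star_reducing_def by blast
  note A = pq_facts[OF R assms(2,3)]
  note B = pq_facts[OF R assms(3,2)]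
  show ?thesis using A B by blast
qed

end
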